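(* Let $\mathbb{C}$ be a regular category. If $\mathbb{C}$ has finite 2-fold subobject decompositions, then $\mathbb{C}$ is a majority category.
   Context: A category is regular if it has finite limits and coequalizers of kernel pairs and regular epimorphisms are pullback-stable; the image of a subobject $S$ (represented by $s$) under a morphism $f$ is the subobject represented by the mono part of a regular epi–mono factorization of $fs$. $\mathbb{C}$ has finite 2-fold subobject decompositions if for every positive integer $n$, all objects $A_1,\dots,A_n$ and all subobjects $S,T$ of $A_1\times\cdots\times A_n$: if for all $i,j\in\{1,\dots,n\}$ the images of $S$ and $T$ under $(\pi_i,\pi_j):A_1\times\cdots\times A_n\to A_i\times A_j$ coincide, then $S=T$. For $w:S\to W$ and subobject $A$ of $W$, $w\in_S A$ means $w$ factors through a representative of $A$. A ternary relation $R\leqslant X\times Y\times Z$ is majority-selecting if for all $S$ and $x,x':S\to X$, $y,y':S\to Y$, $z,z':S\to Z$: $(x,y,z')\in_S R$, $(x,y',z)\in_S R$, $(x',y,z)\in_S R$ imply $(x,y,z)\in_S R$; $\mathbb{C}$ is a majority category if every ternary relation in it is majority-selecting. *)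

theory Defs
  imports Main
begin

record ('o, 'm) cat =
  cObj  :: "'o set"
  cArr  :: "'m set"
  cdom  :: "'m \<Rightarrow> 'o"
  ccod  :: "'m \<Rightarrow> 'o"
  cid   :: "'o \<Rightarrow> 'm"
  ccomp :: "'m \<Rightarrow> 'm \<Rightarrow> 'm"   (* ccomp C g f = g \<circ> f *)

definition homs :: "('o, 'm) cat \<Rightarrow> 'o \<Rightarrow> 'o \<Rightarrow> 'm set" where
  "homs C A B = {f \<in> cArr C. cdom C f = A \<and> ccod C f = B}"

definition category :: "('o, 'm) cat \<Rightarrow> bool" where
  "category C \<longleftrightarrow>
     (\<forall>f \<in> cArr C. cdom C f \<in> cObj C \<and> ccod C f \<in> cObj C) \<and>
     (\<forall>A \<in> cObj C. cid C A \<in> homs C A A) \<and>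
     (\<forall>f \<in> cArr C. \<forall>g \<in> cArr C. ccod C f = cdom C g \<longrightarrow>
        ccomp C g f \<in> homs C (cdom C f) (ccod C g)) \<and>
     (\<forall>f \<in> cArr C. ccomp C (cid C (ccod C f)) f = f \<and> ccomp C f (cid C (cdom C f)) = f) \<and>
     (\<forall>f \<in> cArr C. \<forall>g \<in> cArr C. \<forall>h \<in> cArr C.
        ccod C f = cdom C g \<and> ccod C g = cdom C h \<longrightarrow>
        ccomp C h (ccomp C g f) = ccomp C (ccomp C h g) f)"

definition is_mono :: "('o, 'm) cat \<Rightarrow> 'm \<Rightarrow> bool" where
  "is_mono C m \<longleftrightarrow> m \<in> cArr C \<and>
     (\<forall>g \<in> cArr C. \<forall>h \<in> cArr C.
        ccod C g = cdom C m \<and> ccod C h = cdom C m \<and> cdom C g = cdom C h \<and>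
        ccomp C m g = ccomp C m h \<longrightarrow> g = h)"

definition is_terminal :: "('o, 'm) cat \<Rightarrow> 'o \<Rightarrow> bool" where
  "is_terminal C T \<longleftrightarrow> T \<in> cObj C \<and> (\<forall>A \<in> cObj C. \<exists>!f. f \<in> homs C A T)"

definition is_pullback :: "('o, 'm) cat \<Rightarrow> 'm \<Rightarrow> 'm \<Rightarrow> 'm \<Rightarrow> 'm \<Rightarrow> bool" where
  "is_pullback C f g p q \<longleftrightarrow>
     f \<in> cArr C \<and> g \<in> cArr C \<and> ccod C f = ccod C g \<and>
     p \<in> homs C (cdom C p) (cdom C f) \<and> q \<in> homs C (cdom C p) (cdom C g) \<and>
     ccomp C f p = ccomp C g q \<and>
     (\<forall>x \<in> cArr C. \<forall>y \<in> cArr C.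
        cdom C x = cdom C y \<and> ccod C x = cdom C f \<and> ccod C y = cdom C g \<and>
        ccomp C f x = ccomp C g y \<longrightarrow>
        (\<exists>!u. u \<in> homs C (cdom C x) (cdom C p) \<and> ccomp C p u = x \<and> ccomp C q u = y))"

definition is_coequalizer :: "('o, 'm) cat \<Rightarrow> 'm \<Rightarrow> 'm \<Rightarrow> 'm \<Rightarrow> bool" where
  "is_coequalizer C a b e \<longleftrightarrow>
     a \<in> cArr C \<and> b \<in> cArr C \<and> cdom C a = cdom C b \<and> ccod C a = ccod C b \<and>
     e \<in> cArr C \<and> cdom C e = ccod C a \<and> ccomp C e a = ccomp C e b \<and>
     (\<forall>x \<in> cArr C. cdom C x = ccod C a \<and> ccomp C x a = ccomp C x b \<longrightarrow>
        (\<exists>!u. u \<in> homs C (ccod C e) (ccod C x) \<and> ccomp C u e = x))"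

definition regular_epi :: "('o, 'm) cat \<Rightarrow> 'm \<Rightarrow> bool" where
  "regular_epi C e \<longleftrightarrow> (\<exists>a b. is_coequalizer C a b e)"

definition has_finite_limits :: "('o, 'm) cat \<Rightarrow> bool" where
  "has_finite_limits C \<longleftrightarrow> (\<exists>T. is_terminal C T) \<and>
     (\<forall>f \<in> cArr C. \<forall>g \<in> cArr C. ccod C f = ccod C g \<longrightarrow> (\<exists>p q. is_pullback C f g p q))"

definition has_coequalizers_of_kernel_pairs :: "('o, 'm) cat \<Rightarrow> bool" where
  "has_coequalizers_of_kernel_pairs C \<longleftrightarrow>
     (\<forall>f p q. is_pullback C f f p q \<longrightarrow> (\<exists>e. is_coequalizer C p q e))"

definition regular_epis_pullback_stable :: "('o, 'm) cat \<Rightarrow> bool" where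
  "regular_epis_pullback_stable C \<longleftrightarrow>
     (\<forall>e g p q. regular_epi C e \<and> is_pullback C e g p q \<longrightarrow> regular_epi C q)"

definition regular_category :: "('o, 'm) cat \<Rightarrow> bool" where
  "regular_category C \<longleftrightarrow> category C \<and> has_finite_limits C \<and>
     has_coequalizers_of_kernel_pairs C \<and> regular_epis_pullback_stable C"

definition is_product :: "('o, 'm) cat \<Rightarrow> nat \<Rightarrow> (nat \<Rightarrow> 'o) \<Rightarrow> 'o \<Rightarrow> (nat \<Rightarrow> 'm) \<Rightarrow> bool" where
  "is_product C n A P \<pi> \<longleftrightarrow> P \<in> cObj C \<and> (\<forall>i<n. \<pi> i \<in> homs C P (A i)) \<and>
     (\<forall>X \<in> cObj C. \<forall>f. (\<forall>i<n. f i \<in> homs C X (A i)) \<longrightarrow>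
        (\<exists>!u. u \<in> homs C X P \<and> (\<forall>i<n. ccomp C (\<pi> i) u = f i)))"

definition sub_le :: "('o, 'm) cat \<Rightarrow> 'm \<Rightarrow> 'm \<Rightarrow> bool" where
  "sub_le C s t \<longleftrightarrow> (\<exists>u \<in> homs C (cdom C s) (cdom C t). ccomp C t u = s)"

definition same_sub :: "('o, 'm) cat \<Rightarrow> 'm \<Rightarrow> 'm \<Rightarrow> bool" where
  "same_sub C s t \<longleftrightarrow> sub_le C s t \<and> sub_le C t s"

definition is_image :: "('o, 'm) cat \<Rightarrow> 'm \<Rightarrow> 'm \<Rightarrow> 'm \<Rightarrow> bool" where
  "is_image C f s m \<longleftrightarrow> (\<exists>e. regular_epi C e \<and> is_mono C m \<and>
     cdom C e = cdom C s \<and> ccod C e = cdom C m \<and> ccomp C m e = ccomp C f s)"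

definition mem_sub :: "('o, 'm) cat \<Rightarrow> 'm \<Rightarrow> 'm \<Rightarrow> bool" where
  "mem_sub C w r \<longleftrightarrow> (\<exists>u \<in> homs C (cdom C w) (cdom C r). ccomp C r u = w)"

definition has_finite_2fold_subobject_decompositions :: "('o, 'm) cat \<Rightarrow> bool" where
  "has_finite_2fold_subobject_decompositions C \<longleftrightarrow>
     (\<forall>n A P \<pi>. 0 < n \<and> is_product C n A P \<pi> \<longrightarrow>
       (\<forall>s t. is_mono C s \<and> ccod C s = P \<and> is_mono C t \<and> ccod C t = P \<and>
          (\<forall>i<n. \<forall>j<n. \<forall>Q \<rho> h.
              is_product C 2 (\<lambda>k. if k = 0 then A i else A j) Q \<rho> \<and>
              h \<in> homs C P Q \<and> ccomp C (\<rho> 0) h = \<pi> i \<and> ccomp C (\<rho> 1) h = \<pi> j \<longrightarrow>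
              (\<forall>m m'. is_image C h s m \<and> is_image C h t m' \<longrightarrow> same_sub C m m'))
          \<longrightarrow> same_sub C s t))"

definition triple :: "'o \<Rightarrow> 'o \<Rightarrow> 'o \<Rightarrow> nat \<Rightarrow> 'o" where
  "triple X Y Z = (\<lambda>k. if k = 0 then X else if k = 1 then Y else Z)"

definition has_components :: "('o, 'm) cat \<Rightarrow> (nat \<Rightarrow> 'm) \<Rightarrow> 'm \<Rightarrow> 'm \<Rightarrow> 'm \<Rightarrow> 'm \<Rightarrow> bool" where
  "has_components C \<pi> w a b c \<longleftrightarrow>
     ccomp C (\<pi> 0) w = a \<and> ccomp C (\<pi> 1) w = b \<and> ccomp C (\<pi> 2) w = c"

definition majority_selecting ::
  "('o, 'm) cat \<Rightarrow> 'o \<Rightarrow> 'o \<Rightarrow> 'o \<Rightarrow> 'o \<Rightarrow> (nat \<Rightarrow> 'm) \<Rightarrow> 'm \<Rightarrow> bool" where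
  "majority_selecting C X Y Z P \<pi> r \<longleftrightarrow>
     (\<forall>S \<in> cObj C. \<forall>x \<in> homs C S X. \<forall>x' \<in> homs C S X.
        \<forall>y \<in> homs C S Y. \<forall>y' \<in> homs C S Y. \<forall>z \<in> homs C S Z. \<forall>z' \<in> homs C S Z.
        \<forall>w1 \<in> homs C S P. \<forall>w2 \<in> homs C S P. \<forall>w3 \<in> homs C S P. \<forall>w \<in> homs C S P.
          has_components C \<pi> w1 x y z' \<and> has_components C \<pi> w2 x y' z \<and>
          has_components C \<pi> w3 x' y z \<and> has_components C \<pi> w x y z \<and>
          mem_sub C w1 r \<and> mem_sub C w2 r \<and> mem_sub C w3 r \<longrightarrow> mem_sub C w r)"

definition majority_category :: "('o, 'm) cat \<Rightarrow> bool" where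
  "majority_category C \<longleftrightarrow>
     (\<forall>X Y Z P \<pi> r. X \<in> cObj C \<and> Y \<in> cObj C \<and> Z \<in> cObj C \<and>
        is_product C 3 (triple X Y Z) P \<pi> \<and> is_mono C r \<and> ccod C r = P \<longrightarrow>
        majority_selecting C X Y Z P \<pi> r)"

end

theory Submission
  imports Defs
begin

locale cc = fixes C :: "('o,'m) cat" assumes cat: "category C"
begin

abbreviation cmp (infixr "\<cdot>" 55) where "g \<cdot> f \<equiv> ccomp C g f"
abbreviation "Arr \<equiv> cArr C"
abbreviation "dm \<equiv> cdom C"
abbreviation "cd \<equiv> ccod C"

lemma ex1_eq: "\<exists>!x. P x \<Longrightarrow> P a \<Longrightarrow> P b \<Longrightarrow> a = b" by blast

lemma comp_arr[simp]: "f \<in> Arr \<Longrightarrow> g \<in> Arr \<Longrightarrow> cd f = dm g \<Longrightarrow> g \<cdot> f \<in> Arr"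
  and dom_comp[simp]: "f \<in> Arr \<Longrightarrow> g \<in> Arr \<Longrightarrow> cd f = dm g \<Longrightarrow> dm (g \<cdot> f) = dm f"
  and cod_comp[simp]: "f \<in> Arr \<Longrightarrow> g \<in> Arr \<Longrightarrow> cd f = dm g \<Longrightarrow> cd (g \<cdot> f) = cd g"
  using cat unfolding category_def homs_def by blast+

lemma assoc[simp]: "f \<in> Arr \<Longrightarrow> g \<in> Arr \<Longrightarrow> h \<in> Arr \<Longrightarrow> cd f = dm g \<Longrightarrow> cd g = dm h \<Longrightarrow>
   (h \<cdot> g) \<cdot> f = h \<cdot> (g \<cdot> f)"
  using cat unfolding category_def by metis

lemma dom_obj: "f \<in> Arr \<Longrightarrow> dm f \<in> cObj C" and cod_obj: "f \<in> Arr \<Longrightarrow> cd f \<in> cObj C"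
  using cat unfolding category_def by blast+

lemma mono_cancel: assumes "is_mono C m" "g \<in> Arr" "h \<in> Arr" "cd g = dm m" "cd h = dm m" "dm g = dm h"
  "m \<cdot> g = m \<cdot> h" shows "g = h"
proof -
  have "\<forall>g \<in> Arr. \<forall>h \<in> Arr. cd g = dm m \<and> cd h = dm m \<and> dm g = dm h \<and> m \<cdot> g = m \<cdot> h \<longrightarrow> g = h"
    using assms(1) unfolding is_mono_def by (elim conjE) assumption
  from this[rule_format, OF assms(2,3)] show ?thesis using assms(4-7) by simp
qed

lemma coeq_facts: assumes "is_coequalizer C a b e"
  shows "a \<in> Arr" "b \<in> Arr" "dm a = dm b" "cd a = cd b" "e \<in> Arr" "dm e = cd a" "e \<cdot> a = e \<cdot> b"
proof -
  have "a \<in> Arr \<and> b \<in> Arr \<and> dm a = dm b \<and> cd a = cd b \<and> e \<in> Arr \<and> dm e = cd a \<and> e \<cdot> a = e \<cdot> b"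
    using assms unfolding is_coequalizer_def by (elim conjE) (intro conjI; assumption)
  thus "a \<in> Arr" "b \<in> Arr" "dm a = dm b" "cd a = cd b" "e \<in> Arr" "dm e = cd a" "e \<cdot> a = e \<cdot> b" by simp_all
qed

lemma coeq_up: assumes "is_coequalizer C a b e" "x \<in> Arr" "dm x = cd a" "x \<cdot> a = x \<cdot> b"
  shows "\<exists>!u. u \<in> homs C (cd e) (cd x) \<and> u \<cdot> e = x"
proof -
  have "\<forall>x \<in> Arr. dm x = cd a \<and> x \<cdot> a = x \<cdot> b \<longrightarrow> (\<exists>!u. u \<in> homs C (cd e) (cd x) \<and> u \<cdot> e = x)"
    using assms(1) unfolding is_coequalizer_def by (elim conjE) assumption
  from this[rule_format, OF assms(2) conjI[OF assms(3) assms(4)]] show ?thesis .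
qed

lemma regepi_epi:
  assumes "regular_epi C e" "x \<in> Arr" "y \<in> Arr" "dm x = cd e" "dm y = cd e" "cd x = cd y"
    "x \<cdot> e = y \<cdot> e" shows "x = y"
proof -
  obtain a b where co: "is_coequalizer C a b e" using assms(1) unfolding regular_epi_def by blast
  note e = coeq_facts[OF co]
  have xe: "x \<cdot> e \<in> Arr" "dm (x \<cdot> e) = cd a" "cd (x \<cdot> e) = cd x" using e assms by simp_all
  have "(x \<cdot> e) \<cdot> a = (x \<cdot> e) \<cdot> b" using e assms by (simp add: e(7))
  from coeq_up[OF co xe(1,2) this] have "\<exists>!u. u \<in> homs C (cd e) (cd x) \<and> u \<cdot> e = x \<cdot> e"
    using xe by simp
  moreover have "x \<in> homs C (cd e) (cd x)" "y \<in> homs C (cd e) (cd x)" using assms unfolding homs_def by auto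
  ultimately show ?thesis using assms(7) by (intro ex1_eq[of "\<lambda>u. u \<in> homs C (cd e) (cd x) \<and> u \<cdot> e = x \<cdot> e" x y]) simp_all
qed

lemma diag:
  assumes "regular_epi C e" "is_mono C m" "f \<in> Arr" "dm f = dm e" "cd f = dm m"
    "v \<in> Arr" "dm v = cd e" "cd v = cd m" "v \<cdot> e = m \<cdot> f"
  shows "\<exists>d \<in> homs C (cd e) (dm m). m \<cdot> d = v"
proof -
  obtain a b where co: "is_coequalizer C a b e" using assms(1) unfolding regular_epi_def by blast
  note e = coeq_facts[OF co]
  have m: "m \<in> Arr" using assms(2) unfolding is_mono_def by blast
  have "m \<cdot> (f \<cdot> a) = (m \<cdot> f) \<cdot> a" using assms e m assoc[of a f m] by simp
  also have "\<dots> = (v \<cdot> e) \<cdot> a" using assms by simp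
  also have "\<dots> = v \<cdot> (e \<cdot> a)" using assms e m assoc[of a e v] by simp
  also have "\<dots> = v \<cdot> (e \<cdot> b)" using e(7) by simp
  also have "\<dots> = m \<cdot> (f \<cdot> b)" using assms e m by (simp del: assoc add: assoc[symmetric])
  finally have mm: "m \<cdot> (f \<cdot> a) = m \<cdot> (f \<cdot> b)" .
  have "f \<cdot> a \<in> Arr" "f \<cdot> b \<in> Arr" "cd (f \<cdot> a) = dm m" "cd (f \<cdot> b) = dm m"
    "dm (f \<cdot> a) = dm (f \<cdot> b)" using e assms by simp_all
  note fa = this
  have fab: "f \<cdot> a = f \<cdot> b" by (rule mono_cancel[OF assms(2) fa(1,2,3,4,5) mm])
  have "dm f = cd a" using assms(4) e(6) by simp
  from coeq_up[OF co assms(3) this fab] obtain d where d: "d \<in> homs C (cd e) (cd f)" "d \<cdot> e = f"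
    by (metis ex1_implies_ex)
  have da: "d \<in> Arr" "dm d = cd e" "cd d = dm m" using d(1) assms(5) unfolding homs_def by simp_all
  have "(m \<cdot> d) \<cdot> e = m \<cdot> (d \<cdot> e)" using da assms e m assoc[of e d m] by simp
  also have "\<dots> = v \<cdot> e" using d(2) assms(9) by simp
  finally have eq: "(m \<cdot> d) \<cdot> e = v \<cdot> e" .
  have md: "m \<cdot> d \<in> Arr" "dm (m \<cdot> d) = cd e" "cd (m \<cdot> d) = cd v"
    using da assms e m by simp_all
  have "m \<cdot> d = v" by (rule regepi_epi[OF assms(1) md(1) assms(6) md(2) assms(7) md(3) eq])
  moreover have "d \<in> homs C (cd e) (dm m)" using d(1) assms(5) by simp
  ultimately show ?thesis by blast
qed

lemma pb_facts: assumes "is_pullback C f g p q"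
  shows "f \<in> Arr" "g \<in> Arr" "cd f = cd g" "p \<in> Arr" "q \<in> Arr" "dm q = dm p"
    "cd p = dm f" "cd q = dm g" "f \<cdot> p = g \<cdot> q"
proof -
  have "f \<in> Arr \<and> g \<in> Arr \<and> cd f = cd g \<and>
     p \<in> homs C (dm p) (dm f) \<and> q \<in> homs C (dm p) (dm g) \<and> f \<cdot> p = g \<cdot> q"
    using assms unfolding is_pullback_def by (elim conjE) (intro conjI; assumption)
  thus "f \<in> Arr" "g \<in> Arr" "cd f = cd g" "p \<in> Arr" "q \<in> Arr" "dm q = dm p"
    "cd p = dm f" "cd q = dm g" "f \<cdot> p = g \<cdot> q" unfolding homs_def by auto
qed

lemma pb_ex1: assumes "is_pullback C f g p q" "x \<in> Arr" "y \<in> Arr" "dm x = dm y"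
  "cd x = dm f" "cd y = dm g" "f \<cdot> x = g \<cdot> y"
  shows "\<exists>!u. u \<in> homs C (dm x) (dm p) \<and> p \<cdot> u = x \<and> q \<cdot> u = y"
proof -
  have "\<forall>x \<in> Arr. \<forall>y \<in> Arr.
        dm x = dm y \<and> cd x = dm f \<and> cd y = dm g \<and> f \<cdot> x = g \<cdot> y \<longrightarrow>
        (\<exists>!u. u \<in> homs C (dm x) (dm p) \<and> p \<cdot> u = x \<and> q \<cdot> u = y)"
    using assms(1) unfolding is_pullback_def by (elim conjE) assumption
  from this[rule_format, OF assms(2,3) conjI[OF assms(4) conjI[OF assms(5) conjI[OF assms(6) assms(7)]]]]
  show ?thesis .
qed

lemma pb_up: assumes "is_pullback C f g p q" "x \<in> Arr" "y \<in> Arr" "dm x = dm y"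
  "cd x = dm f" "cd y = dm g" "f \<cdot> x = g \<cdot> y"
  shows "\<exists>u. u \<in> Arr \<and> dm u = dm x \<and> cd u = dm p \<and> p \<cdot> u = x \<and> q \<cdot> u = y"
proof -
  from pb_ex1[OF assms] obtain u where "u \<in> homs C (dm x) (dm p) \<and> p \<cdot> u = x \<and> q \<cdot> u = y"
    by (metis ex1_implies_ex)
  thus ?thesis unfolding homs_def by auto
qed

lemma pb_uniq: assumes "is_pullback C f g p q" "u1 \<in> Arr" "u2 \<in> Arr" "dm u1 = dm u2"
  "cd u1 = dm p" "cd u2 = dm p" "p \<cdot> u1 = p \<cdot> u2" "q \<cdot> u1 = q \<cdot> u2"
  shows "u1 = u2"
proof -
  note pf = pb_facts[OF assms(1)]
  let ?x = "p \<cdot> u1" and ?y = "q \<cdot> u1"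
  have xy: "?x \<in> Arr" "?y \<in> Arr" "dm ?x = dm ?y" "cd ?x = dm f" "cd ?y = dm g"
    using pf assms by simp_all
  have "f \<cdot> ?x = g \<cdot> ?y" using pf assms assoc[of u1 p f] assoc[of u1 q g] by simp
  from pb_ex1[OF assms(1) xy this]
  have ex: "\<exists>!u. u \<in> homs C (dm ?x) (dm p) \<and> p \<cdot> u = ?x \<and> q \<cdot> u = ?y" .
  have d: "dm ?x = dm u1" using pf assms by simp
  show ?thesis
    by (rule ex1_eq[OF ex]) (use d assms in \<open>simp_all add: homs_def\<close>)
qed

lemma pb_ex: assumes "regular_category C" "f \<in> Arr" "g \<in> Arr" "cd f = cd g" shows "\<exists>p q. is_pullback C f g p q"
proof -
  have "has_finite_limits C" using assms(1) unfolding regular_category_def by simp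
  thus ?thesis using assms(2-4) unfolding has_finite_limits_def by blast
qed

lemma regepi_facts: assumes "regular_epi C e" shows "e \<in> Arr"
proof -
  obtain a b where "is_coequalizer C a b e" using assms unfolding regular_epi_def by blast
  thus ?thesis unfolding is_coequalizer_def by blast
qed

lemma pb_stable: assumes "regular_category C" "regular_epi C e" "is_pullback C e g p q"
  shows "regular_epi C q"
proof -
  have "regular_epis_pullback_stable C" using assms(1) unfolding regular_category_def by (elim conjE)
  hence "\<forall>e g p q. regular_epi C e \<and> is_pullback C e g p q \<longrightarrow> regular_epi C q"
    unfolding regular_epis_pullback_stable_def .
  thus ?thesis using assms(2,3) by blast
qed

lemma kp_coeq: assumes "regular_category C" "is_pullback C f f p q"
  shows "\<exists>e. is_coequalizer C p q e"
proof -
  have "has_coequalizers_of_kernel_pairs C" using assms(1) unfolding regular_category_def by (elim conjE)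
  hence "\<forall>f p q. is_pullback C f f p q \<longrightarrow> (\<exists>e. is_coequalizer C p q e)"
    unfolding has_coequalizers_of_kernel_pairs_def .
  thus ?thesis using assms(2) by blast
qed

lemma image_ex:
  assumes reg: "regular_category C" and f: "f \<in> Arr"
  shows "\<exists>e m. regular_epi C e \<and> is_mono C m \<and> e \<in> Arr \<and> m \<in> Arr \<and> dm e = dm f \<and> cd e = dm m \<and> cd m = cd f \<and> m \<cdot> e = f"
proof -
  define A where "A = dm f"
  define B where "B = cd f"
  have tf: "f \<in> Arr" "dm f = A" "cd f = B" using f A_def B_def by simp_all
  obtain p q where kp: "is_pullback C f f p q" using pb_ex[OF reg f f] by blast
  define Kf where "Kf = dm p"
  have tp: "p \<in> Arr" "dm p = Kf" "cd p = A" "q \<in> Arr" "dm q = Kf" "cd q = A" "f \<cdot> p = f \<cdot> q"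
    using pb_facts[OF kp] Kf_def tf by simp_all
  obtain e where ce: "is_coequalizer C p q e" using kp_coeq[OF reg kp] by blast
  define I where "I = cd e"
  have te: "e \<in> Arr" "dm e = A" "cd e = I" "e \<cdot> p = e \<cdot> q"
    using coeq_facts[OF ce] tp I_def by simp_all
  have re: "regular_epi C e" using ce unfolding regular_epi_def by blast
  have "dm f = cd p" using tp tf by simp
  from coeq_up[OF ce f this tp(7)] obtain m where m: "m \<in> homs C (cd e) (cd f)" "m \<cdot> e = f"
    by (metis ex1_implies_ex)
  have tm: "m \<in> Arr" "dm m = I" "cd m = B" using m(1) te tf unfolding homs_def by simp_all
  obtain u v where kpm: "is_pullback C m m u v" using pb_ex[OF reg tm(1) tm(1)] by blast
  define K where "K = dm u"
  have tu: "u \<in> Arr" "dm u = K" "cd u = I" "v \<in> Arr" "dm v = K" "cd v = I" and equv: "m \<cdot> u = m \<cdot> v"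
    using pb_facts[OF kpm] K_def tm by simp_all
  have "cd e = cd u" using tu te by simp
  then obtain a e1 where pa: "is_pullback C e u a e1" using pb_ex[OF reg te(1) tu(1)] by blast
  define P1 where "P1 = dm a"
  have ta: "a \<in> Arr" "dm a = P1" "cd a = A" "e1 \<in> Arr" "dm e1 = P1" "cd e1 = K" and eqa: "e \<cdot> a = u \<cdot> e1"
    using pb_facts[OF pa] P1_def tu te by simp_all
  have re1: "regular_epi C e1" by (rule pb_stable[OF reg re pa])
  have tve1: "v \<cdot> e1 \<in> Arr" "cd (v \<cdot> e1) = I" "dm (v \<cdot> e1) = P1" using ta tu by simp_all
  have "cd e = cd (v \<cdot> e1)" using tve1 te by simp
  then obtain b e2 where pb2: "is_pullback C e (v \<cdot> e1) b e2" using pb_ex[OF reg te(1) tve1(1)] by blast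
  define P2 where "P2 = dm b"
  have tb: "b \<in> Arr" "dm b = P2" "cd b = A" "e2 \<in> Arr" "dm e2 = P2" "cd e2 = P1" and eqb: "e \<cdot> b = (v \<cdot> e1) \<cdot> e2"
    using pb_facts[OF pb2] P2_def tve1 te by simp_all
  have re2: "regular_epi C e2" by (rule pb_stable[OF reg re pb2])
  have "f \<cdot> (a \<cdot> e2) = (m \<cdot> e) \<cdot> (a \<cdot> e2)" using m(2) by simp
  also have "\<dots> = m \<cdot> ((e \<cdot> a) \<cdot> e2)" using ta tb te tm by simp
  also have "\<dots> = m \<cdot> ((u \<cdot> e1) \<cdot> e2)" using eqa by simp
  also have "\<dots> = (m \<cdot> u) \<cdot> (e1 \<cdot> e2)" using ta tb te tm tu by simp
  also have "\<dots> = (m \<cdot> v) \<cdot> (e1 \<cdot> e2)" using equv by simp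
  also have "\<dots> = m \<cdot> ((v \<cdot> e1) \<cdot> e2)" using ta tb te tm tu by simp
  also have "\<dots> = m \<cdot> (e \<cdot> b)" using eqb by simp
  also have "\<dots> = (m \<cdot> e) \<cdot> b" using ta tb te tm by simp
  also have "\<dots> = f \<cdot> b" using m(2) by simp
  finally have fe: "f \<cdot> (a \<cdot> e2) = f \<cdot> b" .
  have ae2: "a \<cdot> e2 \<in> Arr" "dm (a \<cdot> e2) = dm b" "cd (a \<cdot> e2) = dm f" "cd b = dm f"
    using ta tb tf by simp_all
  from pb_up[OF kp ae2(1) tb(1) ae2(2,3,4) fe] obtain c where
    c: "c \<in> Arr" "cd c = dm p" "p \<cdot> c = a \<cdot> e2" "q \<cdot> c = b" by blast
  have tc: "c \<in> Arr" "cd c = Kf" using c tp by simp_all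
  have "(u \<cdot> e1) \<cdot> e2 = (e \<cdot> a) \<cdot> e2" using eqa by simp
  also have "\<dots> = e \<cdot> (a \<cdot> e2)" using ta tb te by simp
  also have "\<dots> = e \<cdot> (p \<cdot> c)" using c(3) by simp
  also have "\<dots> = (e \<cdot> p) \<cdot> c" using tp(1-6) te(1-3) tc by simp
  also have "\<dots> = (e \<cdot> q) \<cdot> c" using te(4) by simp
  also have "\<dots> = e \<cdot> (q \<cdot> c)" using tp(1-6) te(1-3) tc by simp
  also have "\<dots> = e \<cdot> b" using c(4) by simp
  also have "\<dots> = (v \<cdot> e1) \<cdot> e2" using eqb by simp
  finally have "(u \<cdot> e1) \<cdot> e2 = (v \<cdot> e1) \<cdot> e2" .
  note eq2 = this
  have x1: "u \<cdot> e1 \<in> Arr" "v \<cdot> e1 \<in> Arr" "dm (u \<cdot> e1) = cd e2" "dm (v \<cdot> e1) = cd e2" "cd (u \<cdot> e1) = cd (v \<cdot> e1)"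
    using ta(1-6) tb(1-6) tu by simp_all
  have eq1: "u \<cdot> e1 = v \<cdot> e1" by (rule regepi_epi[OF re2 x1 eq2])
  have x2: "dm u = cd e1" "dm v = cd e1" "cd u = cd v" using ta(1-6) tu by simp_all
  have uv: "u = v" by (rule regepi_epi[OF re1 tu(1) tu(4) x2 eq1])
  have "is_mono C m" unfolding is_mono_def
  proof (intro conjI ballI impI)
    show "m \<in> Arr" by fact
    fix g h assume g: "g \<in> Arr" and h: "h \<in> Arr" and gh: "cd g = dm m \<and> cd h = dm m \<and> dm g = dm h \<and> m \<cdot> g = m \<cdot> h"
    have "dm g = dm h" "cd g = dm m" "cd h = dm m" "m \<cdot> g = m \<cdot> h" using gh by simp_all
    from pb_up[OF kpm g h this] obtain d where "u \<cdot> d = g" "v \<cdot> d = h" by blast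
    thus "g = h" using uv by metis
  qed
  moreover have "dm e = dm f" "cd e = dm m" "cd m = cd f" using te tm tf by simp_all
  ultimately show ?thesis using re te(1) tm(1) m(2) by blast
qed


lemma prod_proj: assumes "is_product C n A P \<pi>" "i < n"
  shows "\<pi> i \<in> Arr" "dm (\<pi> i) = P" "cd (\<pi> i) = A i"
proof -
  have "\<forall>i<n. \<pi> i \<in> homs C P (A i)" using assms(1) unfolding is_product_def by (elim conjE)
  hence "\<pi> i \<in> homs C P (A i)" using assms(2) by blast
  thus "\<pi> i \<in> Arr" "dm (\<pi> i) = P" "cd (\<pi> i) = A i" unfolding homs_def by simp_all
qed

lemma prod_ex1: assumes "is_product C n A P \<pi>" "X \<in> cObj C" "\<forall>i<n. f i \<in> homs C X (A i)"
  shows "\<exists>!u. u \<in> homs C X P \<and> (\<forall>i<n. \<pi> i \<cdot> u = f i)"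
proof -
  have "\<forall>X \<in> cObj C. \<forall>f. (\<forall>i<n. f i \<in> homs C X (A i)) \<longrightarrow>
        (\<exists>!u. u \<in> homs C X P \<and> (\<forall>i<n. \<pi> i \<cdot> u = f i))"
    using assms(1) unfolding is_product_def by (elim conjE)
  hence "\<forall>f. (\<forall>i<n. f i \<in> homs C X (A i)) \<longrightarrow>
        (\<exists>!u. u \<in> homs C X P \<and> (\<forall>i<n. \<pi> i \<cdot> u = f i))" using assms(2) by (rule bspec)
  hence "(\<forall>i<n. f i \<in> homs C X (A i)) \<longrightarrow>
        (\<exists>!u. u \<in> homs C X P \<and> (\<forall>i<n. \<pi> i \<cdot> u = f i))" by (rule spec)
  thus ?thesis using assms(3) by (rule mp)
qed

lemma prod_ext: assumes "is_product C n A P \<pi>" "u1 \<in> Arr" "u2 \<in> Arr" "dm u1 = dm u2"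
  "cd u1 = P" "cd u2 = P" "\<forall>i<n. \<pi> i \<cdot> u1 = \<pi> i \<cdot> u2"
  shows "u1 = u2"
proof -
  have X: "dm u1 \<in> cObj C" using dom_obj assms(2) by blast
  have "\<forall>i<n. \<pi> i \<cdot> u1 \<in> homs C (dm u1) (A i)"
    using prod_proj[OF assms(1)] assms(2,5) unfolding homs_def by simp
  from prod_ex1[OF assms(1) X this]
  have ex: "\<exists>!u. u \<in> homs C (dm u1) P \<and> (\<forall>i<n. \<pi> i \<cdot> u = \<pi> i \<cdot> u1)" .
  show ?thesis
    by (rule ex1_eq[OF ex]) (use assms in \<open>simp_all add: homs_def\<close>)
qed

lemma less3: "(i::nat) < 3 \<Longrightarrow> i = 0 \<or> i = 1 \<or> i = 2" by auto

lemma prod3_up: assumes "is_product C 3 (triple X Y Z) P \<pi>"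
  "f0 \<in> Arr" "dm f0 = T" "cd f0 = X" "f1 \<in> Arr" "dm f1 = T" "cd f1 = Y" "f2 \<in> Arr" "dm f2 = T" "cd f2 = Z"
  shows "\<exists>u. u \<in> Arr \<and> dm u = T \<and> cd u = P \<and> \<pi> 0 \<cdot> u = f0 \<and> \<pi> 1 \<cdot> u = f1 \<and> \<pi> 2 \<cdot> u = f2"
proof -
  let ?f = "\<lambda>i::nat. if i = 0 then f0 else if i = 1 then f1 else f2"
  have T: "T \<in> cObj C" using dom_obj assms(2,3) by blast
  have "\<forall>i<3. ?f i \<in> homs C T (triple X Y Z i)"
  proof (intro allI impI)
    fix i :: nat assume "i < 3"
    then consider "i = 0" | "i = 1" | "i = 2" using less3 by blast
    thus "?f i \<in> homs C T (triple X Y Z i)" using assms unfolding homs_def triple_def by cases simp_all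
  qed
  from prod_ex1[OF assms(1) T this] obtain u where "u \<in> homs C T P" "\<forall>i<3. \<pi> i \<cdot> u = ?f i"
    by (metis ex1_implies_ex)
  hence "u \<in> Arr \<and> dm u = T \<and> cd u = P \<and> \<pi> 0 \<cdot> u = f0 \<and> \<pi> 1 \<cdot> u = f1 \<and> \<pi> 2 \<cdot> u = f2"
    unfolding homs_def by (simp add: numeral_eq_Suc)
  thus ?thesis by blast
qed

lemma prod3_ext: assumes "is_product C 3 A P \<pi>" "u1 \<in> Arr" "u2 \<in> Arr" "dm u1 = dm u2"
  "cd u1 = P" "cd u2 = P" "\<pi> 0 \<cdot> u1 = \<pi> 0 \<cdot> u2" "\<pi> 1 \<cdot> u1 = \<pi> 1 \<cdot> u2" "\<pi> 2 \<cdot> u1 = \<pi> 2 \<cdot> u2"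
  shows "u1 = u2"
proof (rule prod_ext[OF assms(1-6)], intro allI impI)
  fix i :: nat assume "i < 3"
  then consider "i = 0" | "i = 1" | "i = 2" using less3 by blast
  thus "\<pi> i \<cdot> u1 = \<pi> i \<cdot> u2" using assms(7-9) by cases simp_all
qed

lemma prod2_ext: assumes "is_product C 2 A P \<pi>" "u1 \<in> Arr" "u2 \<in> Arr" "dm u1 = dm u2"
  "cd u1 = P" "cd u2 = P" "\<pi> 0 \<cdot> u1 = \<pi> 0 \<cdot> u2" "\<pi> 1 \<cdot> u1 = \<pi> 1 \<cdot> u2"
  shows "u1 = u2"
proof (rule prod_ext[OF assms(1-6)], intro allI impI)
  fix i :: nat assume "i < 2"
  then consider "i = 0" | "i = 1" by linarith
  thus "\<pi> i \<cdot> u1 = \<pi> i \<cdot> u2" using assms(7-8) by cases simp_all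
qed


lemma app1: assumes "a \<cdot> b = c" "x \<in> Arr" "b \<in> Arr" "a \<in> Arr" "cd x = dm b" "cd b = dm a"
  shows "a \<cdot> (b \<cdot> x) = c \<cdot> x"
proof -
  have "a \<cdot> (b \<cdot> x) = (a \<cdot> b) \<cdot> x" using assoc[OF assms(2,3,4,5,6)] by simp
  thus ?thesis using assms(1) by simp
qed

lemma mono_arr: "is_mono C m \<Longrightarrow> m \<in> Arr" unfolding is_mono_def by (elim conjE)

lemma main:
  assumes reg: "regular_category C" and dec: "has_finite_2fold_subobject_decompositions C"
    and prod: "is_product C 3 (triple X Y Z) P \<pi>" and rm: "is_mono C r" and rP: "cd r = P"
    and hx: "x \<in> homs C S X" "x' \<in> homs C S X" "y \<in> homs C S Y" "y' \<in> homs C S Y"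
      "z \<in> homs C S Z" "z' \<in> homs C S Z"
    and hw: "w1 \<in> homs C S P" "w2 \<in> homs C S P" "w3 \<in> homs C S P" "w \<in> homs C S P"
    and comps: "has_components C \<pi> w1 x y z'" "has_components C \<pi> w2 x y' z"
      "has_components C \<pi> w3 x' y z" "has_components C \<pi> w x y z"
    and mem: "mem_sub C w1 r" "mem_sub C w2 r" "mem_sub C w3 r"
  shows "mem_sub C w r"
proof -
  define R where "R = dm r"
  have tr: "r \<in> Arr" "dm r = R" "cd r = P" using mono_arr[OF rm] R_def rP by simp_all
  have pr: "\<pi> 0 \<in> Arr" "dm (\<pi> 0) = P" "cd (\<pi> 0) = X"
    "\<pi> 1 \<in> Arr" "dm (\<pi> 1) = P" "cd (\<pi> 1) = Y"
    "\<pi> 2 \<in> Arr" "dm (\<pi> 2) = P" "cd (\<pi> 2) = Z"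
    using prod_proj[OF prod, of 0] prod_proj[OF prod, of 1] prod_proj[OF prod, of 2]
    by (simp_all add: triple_def)
  have tx: "x \<in> Arr" "dm x = S" "cd x = X" "x' \<in> Arr" "dm x' = S" "cd x' = X"
    "y \<in> Arr" "dm y = S" "cd y = Y" "y' \<in> Arr" "dm y' = S" "cd y' = Y"
    "z \<in> Arr" "dm z = S" "cd z = Z" "z' \<in> Arr" "dm z' = S" "cd z' = Z"
    using hx unfolding homs_def by simp_all
  have tw: "w1 \<in> Arr" "dm w1 = S" "cd w1 = P" "w2 \<in> Arr" "dm w2 = S" "cd w2 = P"
    "w3 \<in> Arr" "dm w3 = S" "cd w3 = P" "w \<in> Arr" "dm w = S" "cd w = P"
    using hw unfolding homs_def by simp_all
  have cw: "\<pi> 0 \<cdot> w1 = x" "\<pi> 1 \<cdot> w1 = y" "\<pi> 2 \<cdot> w1 = z'"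
    "\<pi> 0 \<cdot> w2 = x" "\<pi> 1 \<cdot> w2 = y'" "\<pi> 2 \<cdot> w2 = z"
    "\<pi> 0 \<cdot> w3 = x'" "\<pi> 1 \<cdot> w3 = y" "\<pi> 2 \<cdot> w3 = z"
    "\<pi> 0 \<cdot> w = x" "\<pi> 1 \<cdot> w = y" "\<pi> 2 \<cdot> w = z"
    using comps unfolding has_components_def by simp_all
  obtain u1 where hu1: "u1 \<in> homs C S R" "r \<cdot> u1 = w1" using mem(1) tw tr unfolding mem_sub_def by auto
  obtain u2 where hu2: "u2 \<in> homs C S R" "r \<cdot> u2 = w2" using mem(2) tw tr unfolding mem_sub_def by auto
  obtain u3 where hu3: "u3 \<in> homs C S R" "r \<cdot> u3 = w3" using mem(3) tw tr unfolding mem_sub_def by auto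
  have tu: "u1 \<in> Arr" "dm u1 = S" "cd u1 = R" "u2 \<in> Arr" "dm u2 = S" "cd u2 = R"
    "u3 \<in> Arr" "dm u3 = S" "cd u3 = R"
    using hu1 hu2 hu3 unfolding homs_def by simp_all
  note ru = hu1(2) hu2(2) hu3(2)
  have ta: "\<pi> 0 \<cdot> r \<in> Arr" "dm (\<pi> 0 \<cdot> r) = R" "cd (\<pi> 0 \<cdot> r) = X"
    "\<pi> 1 \<cdot> r \<in> Arr" "dm (\<pi> 1 \<cdot> r) = R" "cd (\<pi> 1 \<cdot> r) = Y"
    "\<pi> 2 \<cdot> r \<in> Arr" "dm (\<pi> 2 \<cdot> r) = R" "cd (\<pi> 2 \<cdot> r) = Z"
    using tr pr by simp_all
  obtain p1 q1 where pD1: "is_pullback C (\<pi> 0 \<cdot> r) (\<pi> 0 \<cdot> r) p1 q1"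
    using pb_ex[OF reg ta(1) ta(1)] by blast
  define D1 where "D1 = dm p1"
  have tp1: "p1 \<in> Arr" "dm p1 = D1" "cd p1 = R" "q1 \<in> Arr" "dm q1 = D1" "cd q1 = R"
    using pb_facts[OF pD1] D1_def ta by simp_all
  have eqD1: "(\<pi> 0 \<cdot> r) \<cdot> p1 = (\<pi> 0 \<cdot> r) \<cdot> q1" using pb_facts[OF pD1] by simp
  obtain p2 q2 where pF: "is_pullback C (\<pi> 1 \<cdot> r) (\<pi> 1 \<cdot> r) p2 q2"
    using pb_ex[OF reg ta(4) ta(4)] by blast
  define F where "F = dm p2"
  have tp2: "p2 \<in> Arr" "dm p2 = F" "cd p2 = R" "q2 \<in> Arr" "dm q2 = F" "cd q2 = R"
    using pb_facts[OF pF] F_def ta by simp_all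
  have eqF: "(\<pi> 1 \<cdot> r) \<cdot> p2 = (\<pi> 1 \<cdot> r) \<cdot> q2" using pb_facts[OF pF] by simp
  have D1app: "\<pi> 0 \<cdot> (r \<cdot> (p1 \<cdot> v)) = \<pi> 0 \<cdot> (r \<cdot> (q1 \<cdot> v))" if "v \<in> Arr" "cd v = D1" for v
  proof -
    have "((\<pi> 0 \<cdot> r) \<cdot> p1) \<cdot> v = ((\<pi> 0 \<cdot> r) \<cdot> q1) \<cdot> v" by (simp only: eqD1)
    thus ?thesis using that tr pr tp1 by simp
  qed
  have Fapp: "\<pi> 1 \<cdot> (r \<cdot> (p2 \<cdot> v)) = \<pi> 1 \<cdot> (r \<cdot> (q2 \<cdot> v))" if "v \<in> Arr" "cd v = F" for v
  proof -
    have "((\<pi> 1 \<cdot> r) \<cdot> p2) \<cdot> v = ((\<pi> 1 \<cdot> r) \<cdot> q2) \<cdot> v" by (simp only: eqF)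
    thus ?thesis using that tr pr tp2 by simp
  qed
  obtain \<phi> where h\<phi>: "\<phi> \<in> Arr" "dm \<phi> = D1" "cd \<phi> = P" "\<pi> 0 \<cdot> \<phi> = \<pi> 0 \<cdot> (r \<cdot> p1)"
    "\<pi> 1 \<cdot> \<phi> = \<pi> 1 \<cdot> (r \<cdot> p1)" "\<pi> 2 \<cdot> \<phi> = \<pi> 2 \<cdot> (r \<cdot> q1)"
    using prod3_up[OF prod, of "\<pi> 0 \<cdot> (r \<cdot> p1)" D1 "\<pi> 1 \<cdot> (r \<cdot> p1)" "\<pi> 2 \<cdot> (r \<cdot> q1)"] tr pr tp1
    by auto
  obtain \<psi> where h\<psi>: "\<psi> \<in> Arr" "dm \<psi> = F" "cd \<psi> = P" "\<pi> 0 \<cdot> \<psi> = \<pi> 0 \<cdot> (r \<cdot> q2)"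
    "\<pi> 1 \<cdot> \<psi> = \<pi> 1 \<cdot> (r \<cdot> p2)" "\<pi> 2 \<cdot> \<psi> = \<pi> 2 \<cdot> (r \<cdot> p2)"
    using prod3_up[OF prod, of "\<pi> 0 \<cdot> (r \<cdot> q2)" F "\<pi> 1 \<cdot> (r \<cdot> p2)" "\<pi> 2 \<cdot> (r \<cdot> p2)"] tr pr tp2
    by auto
  have \<phi>app: "\<pi> 0 \<cdot> (\<phi> \<cdot> v) = \<pi> 0 \<cdot> (r \<cdot> (p1 \<cdot> v))" "\<pi> 1 \<cdot> (\<phi> \<cdot> v) = \<pi> 1 \<cdot> (r \<cdot> (p1 \<cdot> v))"
    "\<pi> 2 \<cdot> (\<phi> \<cdot> v) = \<pi> 2 \<cdot> (r \<cdot> (q1 \<cdot> v))" if "v \<in> Arr" "cd v = D1" for v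
    using app1[OF h\<phi>(4) that(1) h\<phi>(1) pr(1)] app1[OF h\<phi>(5) that(1) h\<phi>(1) pr(4)]
      app1[OF h\<phi>(6) that(1) h\<phi>(1) pr(7)] that h\<phi>(1-3) pr tr tp1 by simp_all
  have \<psi>app: "\<pi> 0 \<cdot> (\<psi> \<cdot> v) = \<pi> 0 \<cdot> (r \<cdot> (q2 \<cdot> v))" "\<pi> 1 \<cdot> (\<psi> \<cdot> v) = \<pi> 1 \<cdot> (r \<cdot> (p2 \<cdot> v))"
    "\<pi> 2 \<cdot> (\<psi> \<cdot> v) = \<pi> 2 \<cdot> (r \<cdot> (p2 \<cdot> v))" if "v \<in> Arr" "cd v = F" for v
    using app1[OF h\<psi>(4) that(1) h\<psi>(1) pr(1)] app1[OF h\<psi>(5) that(1) h\<psi>(1) pr(4)]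
      app1[OF h\<psi>(6) that(1) h\<psi>(1) pr(7)] that h\<psi>(1-3) pr tr tp2 by simp_all
  have "cd \<phi> = cd \<psi>" using h\<phi> h\<psi> by simp
  then obtain dD dF where pD: "is_pullback C \<phi> \<psi> dD dF" using pb_ex[OF reg h\<phi>(1) h\<psi>(1)] by blast
  define D where "D = dm dD"
  have tD: "dD \<in> Arr" "dm dD = D" "cd dD = D1" "dF \<in> Arr" "dm dF = D" "cd dF = F"
    using pb_facts[OF pD] D_def h\<phi> h\<psi> by simp_all
  have eqD: "\<phi> \<cdot> dD = \<psi> \<cdot> dF" using pb_facts[OF pD] by simp
  define g where "g = \<phi> \<cdot> dD"
  have tg: "g \<in> Arr" "dm g = D" "cd g = P" using g_def tD h\<phi> by simp_all
  note T0 = tr pr tx tw tu ta tp1 tp2 h\<phi>(1-3) h\<psi>(1-3) tD tg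
  have "(\<pi> 0 \<cdot> r) \<cdot> u1 = (\<pi> 0 \<cdot> r) \<cdot> u2" using T0 ru cw by simp
  from pb_up[OF pD1 tu(1) tu(4) _ _ _ this] obtain \<delta>1 where
    h\<delta>1: "\<delta>1 \<in> Arr" "dm \<delta>1 = S" "cd \<delta>1 = D1" "p1 \<cdot> \<delta>1 = u1" "q1 \<cdot> \<delta>1 = u2"
    using T0 by auto
  have "(\<pi> 1 \<cdot> r) \<cdot> u3 = (\<pi> 1 \<cdot> r) \<cdot> u1" using T0 ru cw by simp
  from pb_up[OF pF tu(7) tu(1) _ _ _ this] obtain \<delta>2 where
    h\<delta>2: "\<delta>2 \<in> Arr" "dm \<delta>2 = S" "cd \<delta>2 = F" "p2 \<cdot> \<delta>2 = u3" "q2 \<cdot> \<delta>2 = u1"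
    using T0 by auto
  have "\<phi> \<cdot> \<delta>1 = \<psi> \<cdot> \<delta>2"
    by (rule prod3_ext[OF prod]) (use T0 h\<delta>1 h\<delta>2 \<phi>app[OF h\<delta>1(1,3)] \<psi>app[OF h\<delta>2(1,3)] ru cw in simp_all)
  from pb_up[OF pD h\<delta>1(1) h\<delta>2(1) _ _ _ this] obtain \<sigma> where
    h\<sigma>: "\<sigma> \<in> Arr" "dm \<sigma> = S" "cd \<sigma> = D" "dD \<cdot> \<sigma> = \<delta>1" "dF \<cdot> \<sigma> = \<delta>2"
    using T0 h\<delta>1 h\<delta>2 by auto
  have g\<sigma>: "g \<cdot> \<sigma> = w"
  proof -
    have "g \<cdot> \<sigma> = \<phi> \<cdot> \<delta>1" unfolding g_def using T0 h\<sigma> by simp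
    also have "\<dots> = w"
      by (rule prod3_ext[OF prod]) (use T0 h\<delta>1 \<phi>app[OF h\<delta>1(1,3)] ru cw in simp_all)
    finally show ?thesis .
  qed
  have diagpt: "\<exists>d. d \<in> Arr \<and> dm d = D \<and> cd d = D \<and> g \<cdot> d = r \<cdot> c"
    if c: "c \<in> Arr" "dm c = D" "cd c = R" for c
  proof -
    from pb_up[OF pD1 c(1) c(1)] obtain a1 where
      ha1: "a1 \<in> Arr" "dm a1 = D" "cd a1 = D1" "p1 \<cdot> a1 = c" "q1 \<cdot> a1 = c"
      using T0 c by auto
    from pb_up[OF pF c(1) c(1)] obtain a2 where
      ha2: "a2 \<in> Arr" "dm a2 = D" "cd a2 = F" "p2 \<cdot> a2 = c" "q2 \<cdot> a2 = c"
      using T0 c by auto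
    have e1: "\<phi> \<cdot> a1 = r \<cdot> c"
      by (rule prod3_ext[OF prod]) (use T0 c ha1 \<phi>app[OF ha1(1,3)] in simp_all)
    have e2: "\<psi> \<cdot> a2 = r \<cdot> c"
      by (rule prod3_ext[OF prod]) (use T0 c ha2 \<psi>app[OF ha2(1,3)] in simp_all)
    have "\<phi> \<cdot> a1 = \<psi> \<cdot> a2" using e1 e2 by simp
    from pb_up[OF pD ha1(1) ha2(1) _ _ _ this] obtain d where
      hd: "d \<in> Arr" "dm d = D" "cd d = D" "dD \<cdot> d = a1" "dF \<cdot> d = a2"
      using T0 ha1 ha2 by auto
    have "g \<cdot> d = \<phi> \<cdot> a1" unfolding g_def using T0 hd by simp
    thus ?thesis using hd e1 by auto
  qed
  have G0: "\<pi> 0 \<cdot> g = \<pi> 0 \<cdot> (r \<cdot> (p1 \<cdot> dD))" and G1: "\<pi> 1 \<cdot> g = \<pi> 1 \<cdot> (r \<cdot> (p1 \<cdot> dD))"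
    and G2: "\<pi> 2 \<cdot> g = \<pi> 2 \<cdot> (r \<cdot> (q1 \<cdot> dD))"
    unfolding g_def using \<phi>app[OF tD(1,3)] by simp_all
  have G0': "\<pi> 0 \<cdot> g = \<pi> 0 \<cdot> (r \<cdot> (q1 \<cdot> dD))" using G0 D1app[OF tD(1,3)] by simp
  have G1': "\<pi> 1 \<cdot> g = \<pi> 1 \<cdot> (r \<cdot> (p2 \<cdot> dF))" and G2': "\<pi> 2 \<cdot> g = \<pi> 2 \<cdot> (r \<cdot> (p2 \<cdot> dF))"
    unfolding g_def eqD using \<psi>app[OF tD(4,6)] by simp_all
  have cover: "\<exists>c. c \<in> Arr \<and> dm c = D \<and> cd c = R \<and> \<pi> i \<cdot> g = \<pi> i \<cdot> (r \<cdot> c) \<and> \<pi> j \<cdot> g = \<pi> j \<cdot> (r \<cdot> c)"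
    if ij: "i < 3" "j < 3" for i j
  proof -
    have c1: "p1 \<cdot> dD \<in> Arr" "dm (p1 \<cdot> dD) = D" "cd (p1 \<cdot> dD) = R" using T0 by simp_all
    have c2: "q1 \<cdot> dD \<in> Arr" "dm (q1 \<cdot> dD) = D" "cd (q1 \<cdot> dD) = R" using T0 by simp_all
    have c3: "p2 \<cdot> dF \<in> Arr" "dm (p2 \<cdot> dF) = D" "cd (p2 \<cdot> dF) = R" using T0 by simp_all
    have H01: "\<pi> k \<cdot> g = \<pi> k \<cdot> (r \<cdot> (p1 \<cdot> dD))" if "k = 0 \<or> k = 1" for k
      using that G0 G1 by auto
    have H02: "\<pi> k \<cdot> g = \<pi> k \<cdot> (r \<cdot> (q1 \<cdot> dD))" if "k = 0 \<or> k = 2" for k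
      using that G0' G2 by auto
    have H12: "\<pi> k \<cdot> g = \<pi> k \<cdot> (r \<cdot> (p2 \<cdot> dF))" if "k = 1 \<or> k = 2" for k
      using that G1' G2' by auto
    have i3: "i = 0 \<or> i = 1 \<or> i = 2" and j3: "j = 0 \<or> j = 1 \<or> j = 2" using less3 ij by auto
    show ?thesis
    proof (cases "i \<noteq> 2 \<and> j \<noteq> 2")
      case True
      hence "(i = 0 \<or> i = 1)" "(j = 0 \<or> j = 1)" using i3 j3 by auto
      thus ?thesis using c1 H01 by blast
    next
      case False
      show ?thesis
      proof (cases "i \<noteq> 1 \<and> j \<noteq> 1")
        case True
        hence "(i = 0 \<or> i = 2)" "(j = 0 \<or> j = 2)" using i3 j3 by auto
        thus ?thesis using c2 H02 by blast
      next
        case False2: False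
        hence "(i = 1 \<or> i = 2)" "(j = 1 \<or> j = 2)" using i3 j3 False by auto
        thus ?thesis using c3 H12 by blast
      qed
    qed
  qed
  obtain e s where hes: "regular_epi C e" "is_mono C s" "e \<in> Arr" "s \<in> Arr" "dm e = dm g"
    "cd e = dm s" "cd s = cd g" "s \<cdot> e = g" using image_ex[OF reg tg(1)] by blast
  define I where "I = dm s"
  have te: "e \<in> Arr" "dm e = D" "cd e = I" "s \<in> Arr" "dm s = I" "cd s = P"
    using hes tg I_def by simp_all
  have "cd s = cd r" using te tr by simp
  then obtain k k' where pK: "is_pullback C s r k k'" using pb_ex[OF reg te(4) tr(1)] by blast
  define K where "K = dm k"
  have tk: "k \<in> Arr" "dm k = K" "cd k = I" "k' \<in> Arr" "dm k' = K" "cd k' = R"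
    using pb_facts[OF pK] K_def te tr by simp_all
  have eqK: "s \<cdot> k = r \<cdot> k'" using pb_facts[OF pK] by simp
  define t where "t = s \<cdot> k"
  have tt: "t \<in> Arr" "dm t = K" "cd t = P" using t_def te tk by simp_all
  have se: "s \<cdot> (e \<cdot> v) = g \<cdot> v" if "v \<in> Arr" "cd v = D" for v
    using app1[OF hes(8) that(1) te(1) te(4)] that te by simp
  have sk: "s \<cdot> (k \<cdot> v) = r \<cdot> (k' \<cdot> v)" if "v \<in> Arr" "cd v = K" for v
    using app1[OF eqK that(1) tk(1) te(4)] that te tk tr by simp
  have tmono: "is_mono C t" unfolding is_mono_def
  proof (intro conjI ballI impI)
    show "t \<in> Arr" by (rule tt(1))
    fix a b assume a: "a \<in> Arr" and b: "b \<in> Arr" and ab: "cd a = dm t \<and> cd b = dm t \<and> dm a = dm b \<and> t \<cdot> a = t \<cdot> b"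
    have ab': "cd a = K" "cd b = K" "dm a = dm b" "t \<cdot> a = t \<cdot> b" using ab tt by simp_all
    have "s \<cdot> (k \<cdot> a) = s \<cdot> (k \<cdot> b)" using ab'(4) a b ab' te tk unfolding t_def by simp
    note sab = this
    have kab: "k \<cdot> a = k \<cdot> b" by (rule mono_cancel[OF hes(2)]) (use sab a b ab' te tk in simp_all)
    have "r \<cdot> (k' \<cdot> a) = r \<cdot> (k' \<cdot> b)" using sk[OF a ab'(1)] sk[OF b ab'(2)] kab by simp
    note rab = this
    have k'ab: "k' \<cdot> a = k' \<cdot> b" by (rule mono_cancel[OF rm]) (use rab a b ab' tr tk in simp_all)
    show "a = b" by (rule pb_uniq[OF pK a b ab'(3)]) (use ab' tk kab k'ab in simp_all)
  qed
  have key: "\<exists>u. u \<in> Arr \<and> dm u = D \<and> cd u = K \<and> h \<cdot> g = h \<cdot> (t \<cdot> u)"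
    if ij: "i < 3" "j < 3" and p2: "is_product C 2 A2 Q \<rho>" and hh: "h \<in> homs C P Q"
      and r0: "\<rho> 0 \<cdot> h = \<pi> i" and r1: "\<rho> 1 \<cdot> h = \<pi> j" for i j A2 Q \<rho> h
  proof -
    have th: "h \<in> Arr" "dm h = P" "cd h = Q" using hh unfolding homs_def by simp_all
    have \<rho>t: "\<rho> 0 \<in> Arr" "dm (\<rho> 0) = Q" "\<rho> 1 \<in> Arr" "dm (\<rho> 1) = Q"
      using prod_proj[OF p2, of 0] prod_proj[OF p2, of 1] by simp_all
    obtain c where hc: "c \<in> Arr" "dm c = D" "cd c = R" "\<pi> i \<cdot> g = \<pi> i \<cdot> (r \<cdot> c)" "\<pi> j \<cdot> g = \<pi> j \<cdot> (r \<cdot> c)"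
      using cover[OF ij] by blast
    obtain d where hd: "d \<in> Arr" "dm d = D" "cd d = D" "g \<cdot> d = r \<cdot> c" using diagpt[OF hc(1-3)] by blast
    have "s \<cdot> (e \<cdot> d) = r \<cdot> c" using se[OF hd(1,3)] hd(4) by simp
    from pb_up[OF pK _ hc(1) _ _ _ this] obtain u where
      hu: "u \<in> Arr" "dm u = D" "cd u = K" "k \<cdot> u = e \<cdot> d" "k' \<cdot> u = c"
      using te tk hd hc tr by auto
    have "h \<cdot> (t \<cdot> u) = h \<cdot> (s \<cdot> (k \<cdot> u))" unfolding t_def using te tk hu by simp
    also have "\<dots> = h \<cdot> (r \<cdot> c)" using hu(4) se[OF hd(1,3)] hd(4) by simp
    finally have htu: "h \<cdot> (t \<cdot> u) = h \<cdot> (r \<cdot> c)" .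
    have pi: "\<pi> i \<in> Arr" "dm (\<pi> i) = P" "\<pi> j \<in> Arr" "dm (\<pi> j) = P"
      using prod_proj[OF prod ij(1)] prod_proj[OF prod ij(2)] by simp_all
    have "h \<cdot> g = h \<cdot> (r \<cdot> c)"
    proof (rule prod2_ext[OF p2])
      show "\<rho> 0 \<cdot> (h \<cdot> g) = \<rho> 0 \<cdot> (h \<cdot> (r \<cdot> c))"
        using app1[OF r0 tg(1) th(1) \<rho>t(1)] app1[OF r0 _ th(1) \<rho>t(1), of "r \<cdot> c"] hc tg th tr \<rho>t by simp
      show "\<rho> 1 \<cdot> (h \<cdot> g) = \<rho> 1 \<cdot> (h \<cdot> (r \<cdot> c))"
        using app1[OF r1 tg(1) th(1) \<rho>t(3)] app1[OF r1 _ th(1) \<rho>t(3), of "r \<cdot> c"] hc tg th tr \<rho>t by simp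
    qed (use hc tg th tr in simp_all)
    thus ?thesis using htu hu by metis
  qed
  have pairs: "\<forall>i<3. \<forall>j<3. \<forall>Q \<rho> h.
      is_product C 2 (\<lambda>k. if k = 0 then triple X Y Z i else triple X Y Z j) Q \<rho> \<and>
      h \<in> homs C P Q \<and> \<rho> 0 \<cdot> h = \<pi> i \<and> \<rho> 1 \<cdot> h = \<pi> j \<longrightarrow>
      (\<forall>m m'. is_image C h s m \<and> is_image C h t m' \<longrightarrow> same_sub C m m')"
  proof (intro allI impI)
    fix i j :: nat and Q \<rho> h m m'
    assume ij: "i < 3" "j < 3"
      and H: "is_product C 2 (\<lambda>k. if k = 0 then triple X Y Z i else triple X Y Z j) Q \<rho> \<and>
      h \<in> homs C P Q \<and> \<rho> 0 \<cdot> h = \<pi> i \<and> \<rho> 1 \<cdot> h = \<pi> j"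
      and IM: "is_image C h s m \<and> is_image C h t m'"
    from H have p2: "is_product C 2 (\<lambda>k. if k = 0 then triple X Y Z i else triple X Y Z j) Q \<rho>"
      and hh: "h \<in> homs C P Q" and r0: "\<rho> 0 \<cdot> h = \<pi> i" and r1: "\<rho> 1 \<cdot> h = \<pi> j" by simp_all
    have th: "h \<in> Arr" "dm h = P" "cd h = Q" using hh unfolding homs_def by simp_all
    obtain u where hu: "u \<in> Arr" "dm u = D" "cd u = K" "h \<cdot> g = h \<cdot> (t \<cdot> u)"
      using key[OF ij p2 hh r0 r1] by blast
    obtain E where hE: "regular_epi C E" "is_mono C m" "dm E = dm s" "cd E = dm m" "m \<cdot> E = h \<cdot> s"
      using IM unfolding is_image_def by blast
    obtain E' where hE': "regular_epi C E'" "is_mono C m'" "dm E' = dm t" "cd E' = dm m'" "m' \<cdot> E' = h \<cdot> t"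
      using IM unfolding is_image_def by blast
    have tE: "E \<in> Arr" "dm E = I" "E' \<in> Arr" "dm E' = K" "m \<in> Arr" "m' \<in> Arr"
      using regepi_facts[OF hE(1)] regepi_facts[OF hE'(1)] mono_arr[OF hE(2)] mono_arr[OF hE'(2)]
        hE(3) hE'(3) te tt by simp_all
    have "cd (m \<cdot> E) = cd (h \<cdot> s)" using hE(5) by simp
    hence cm: "cd m = Q" using tE hE(4) th te by simp
    have "cd (m' \<cdot> E') = cd (h \<cdot> t)" using hE'(5) by simp
    hence cm': "cd m' = Q" using tE hE'(4) th tt by simp
    have "sub_le C m m'"
    proof -
      have "(h \<cdot> s) \<cdot> e = h \<cdot> (s \<cdot> e)" using th te by simp
      also have "\<dots> = h \<cdot> (t \<cdot> u)" using hes(8) hu(4) by simp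
      also have "\<dots> = (h \<cdot> t) \<cdot> u" using th tt hu by simp
      also have "\<dots> = (m' \<cdot> E') \<cdot> u" using hE'(5) by simp
      also have "\<dots> = m' \<cdot> (E' \<cdot> u)" using tE hE'(4) hu by simp
      finally have eq: "(h \<cdot> s) \<cdot> e = m' \<cdot> (E' \<cdot> u)" .
      have "\<exists>d1 \<in> homs C (cd e) (dm m'). m' \<cdot> d1 = h \<cdot> s"
        by (rule diag[OF hes(1) hE'(2) _ _ _ _ _ _ eq]) (use tE hE'(4) hu th te cm' in simp_all)
      then obtain d1 where d1: "d1 \<in> Arr" "dm d1 = I" "cd d1 = dm m'" "m' \<cdot> d1 = h \<cdot> s"
        using te unfolding homs_def by auto
      have eq2: "m \<cdot> E = m' \<cdot> d1" using hE(5) d1(4) by simp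
      have "\<exists>d \<in> homs C (cd E) (dm m'). m' \<cdot> d = m"
        by (rule diag[OF hE(1) hE'(2) _ _ _ _ _ _ eq2]) (use tE d1 hE(4) cm cm' in simp_all)
      thus ?thesis unfolding sub_le_def using hE(4) by simp
    qed
    moreover have "sub_le C m' m"
    proof -
      have "m' \<cdot> E' = h \<cdot> (s \<cdot> k)" using hE'(5) unfolding t_def by simp
      also have "\<dots> = (h \<cdot> s) \<cdot> k" using th te tk by simp
      also have "\<dots> = (m \<cdot> E) \<cdot> k" using hE(5) by simp
      also have "\<dots> = m \<cdot> (E \<cdot> k)" using tE tk hE(4) by simp
      finally have eq: "m' \<cdot> E' = m \<cdot> (E \<cdot> k)" .
      have "\<exists>d \<in> homs C (cd E') (dm m). m \<cdot> d = m'"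
        by (rule diag[OF hE'(1) hE(2) _ _ _ _ _ _ eq]) (use tE tk hE(4) hE'(4) cm cm' in simp_all)
      thus ?thesis unfolding sub_le_def using hE'(4) by simp
    qed
    ultimately show "same_sub C m m'" unfolding same_sub_def by simp
  qed
  have H3: "0 < (3::nat) \<and> is_product C 3 (triple X Y Z) P \<pi>" using prod by simp
  have "\<forall>s t. is_mono C s \<and> cd s = P \<and> is_mono C t \<and> cd t = P \<and>
          (\<forall>i<3. \<forall>j<3. \<forall>Q \<rho> h.
              is_product C 2 (\<lambda>k. if k = 0 then triple X Y Z i else triple X Y Z j) Q \<rho> \<and>
              h \<in> homs C P Q \<and> \<rho> 0 \<cdot> h = \<pi> i \<and> \<rho> 1 \<cdot> h = \<pi> j \<longrightarrow>
              (\<forall>m m'. is_image C h s m \<and> is_image C h t m' \<longrightarrow> same_sub C m m'))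
          \<longrightarrow> same_sub C s t"
    using dec[unfolded has_finite_2fold_subobject_decompositions_def, THEN spec[of _ 3],
      THEN spec[of _ "triple X Y Z"], THEN spec[of _ P], THEN spec[of _ \<pi>], THEN mp, OF H3] .
  hence "is_mono C s \<and> cd s = P \<and> is_mono C t \<and> cd t = P \<and>
          (\<forall>i<3. \<forall>j<3. \<forall>Q \<rho> h.
              is_product C 2 (\<lambda>k. if k = 0 then triple X Y Z i else triple X Y Z j) Q \<rho> \<and>
              h \<in> homs C P Q \<and> \<rho> 0 \<cdot> h = \<pi> i \<and> \<rho> 1 \<cdot> h = \<pi> j \<longrightarrow>
              (\<forall>m m'. is_image C h s m \<and> is_image C h t m' \<longrightarrow> same_sub C m m'))
          \<longrightarrow> same_sub C s t" by blast
  moreover have "is_mono C s \<and> cd s = P \<and> is_mono C t \<and> cd t = P"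
    using hes(2) tmono te tt by simp
  ultimately have "same_sub C s t" using pairs by blast
  then obtain v where hv: "v \<in> homs C (dm s) (dm t)" "t \<cdot> v = s" unfolding same_sub_def sub_le_def by blast
  have tv: "v \<in> Arr" "dm v = I" "cd v = K" using hv(1) te tt unfolding homs_def by simp_all
  have "w = g \<cdot> \<sigma>" using g\<sigma> by simp
  also have "\<dots> = s \<cdot> (e \<cdot> \<sigma>)" using se[OF h\<sigma>(1,3)] by simp
  also have "\<dots> = (t \<cdot> v) \<cdot> (e \<cdot> \<sigma>)" using hv(2) by simp
  also have "\<dots> = s \<cdot> (k \<cdot> (v \<cdot> (e \<cdot> \<sigma>)))" unfolding t_def using te tk tv h\<sigma> by simp
  also have "\<dots> = r \<cdot> (k' \<cdot> (v \<cdot> (e \<cdot> \<sigma>)))" using sk[of "v \<cdot> (e \<cdot> \<sigma>)"] te tk tv h\<sigma> by simp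
  finally have wr: "r \<cdot> (k' \<cdot> (v \<cdot> (e \<cdot> \<sigma>))) = w" by simp
  have "k' \<cdot> (v \<cdot> (e \<cdot> \<sigma>)) \<in> homs C (dm w) (dm r)" unfolding homs_def using te tk tv h\<sigma> tw tr by simp
  thus ?thesis unfolding mem_sub_def using wr by blast
qed

end

theorem theorem4p5:
  fixes C :: "('o, 'm) cat"
  assumes "regular_category C"
    and "has_finite_2fold_subobject_decompositions C"
  shows "majority_category C"
proof -
  have cat: "category C" using assms(1) unfolding regular_category_def by (elim conjE)
  interpret cc C by (rule cc.intro[OF cat])
  show ?thesis unfolding majority_category_def majority_selecting_def
  proof (intro allI impI ballI)
    fix X Y Z P \<pi> r S x x' y y' z z' w1 w2 w3 w
    assume A: "X \<in> cObj C \<and> Y \<in> cObj C \<and> Z \<in> cObj C \<and> is_product C 3 (triple X Y Z) P \<pi> \<and> is_mono C r \<and> ccod C r = P"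
      and hS: "S \<in> cObj C" and hx: "x \<in> homs C S X" "x' \<in> homs C S X" "y \<in> homs C S Y" "y' \<in> homs C S Y"
      "z \<in> homs C S Z" "z' \<in> homs C S Z"
      and hw: "w1 \<in> homs C S P" "w2 \<in> homs C S P" "w3 \<in> homs C S P" "w \<in> homs C S P"
      and B: "has_components C \<pi> w1 x y z' \<and> has_components C \<pi> w2 x y' z \<and>
          has_components C \<pi> w3 x' y z \<and> has_components C \<pi> w x y z \<and>
          mem_sub C w1 r \<and> mem_sub C w2 r \<and> mem_sub C w3 r"
    from A have A1: "is_product C 3 (triple X Y Z) P \<pi>" "is_mono C r" "ccod C r = P" by simp_all
    from B have B1: "has_components C \<pi> w1 x y z'" "has_components C \<pi> w2 x y' z"
      "has_components C \<pi> w3 x' y z" "has_components C \<pi> w x y z"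
      "mem_sub C w1 r" "mem_sub C w2 r" "mem_sub C w3 r" by simp_all
    show "mem_sub C w r" by (rule main[OF assms(1,2) A1 hx hw B1])
  qed
qed

end
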